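(* Let $U$ be a fixed finite set and let $S\subseteq V\subseteq U$ be random sets such that $\Pr[I\in S\mid I\in V]\ge p>2/3$ for all $I\in U$. Suppose $(V,E)$ is a (random) graph on vertex set $V$ consisting of $k$ connected components, each of which is a cycle or a path. Then \[ \mathbb{E}[|V|]\le\frac{2\mathbb{E}[k]+\mathbb{E}[|T^S|]}{3p-2}. \]
   Context: For a graph $(V,E)$ and $S\subseteq V$, $T^S$ denotes the set of vertices $v\in S$ having at least $2$ neighbors in $S$. *)

theory Defs
  imports "HOL-Probability.Probability"
begin

definition simple_graph :: "'a set \<Rightarrow> 'a set set \<Rightarrow> bool" where
  "simple_graph V E \<longleftrightarrow> (\<forall>e\<in>E. card e = 2 \<and> e \<subseteq> V)"

definition adj :: "'a set set \<Rightarrow> 'a \<Rightarrow> 'a \<Rightarrow> bool" where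
  "adj E u v \<longleftrightarrow> {u, v} \<in> E"

definition component :: "'a set \<Rightarrow> 'a set set \<Rightarrow> 'a \<Rightarrow> 'a set" where
  "component V E v = {u \<in> V. (adj E)\<^sup>*\<^sup>* v u}"

definition components :: "'a set \<Rightarrow> 'a set set \<Rightarrow> 'a set set" where
  "components V E = component V E ` V"

definition is_path_on :: "'a set \<Rightarrow> 'a set set \<Rightarrow> bool" where
  "is_path_on C E \<longleftrightarrow> (\<exists>xs. distinct xs \<and> set xs = C \<and>
     {e \<in> E. e \<subseteq> C} = {{xs ! i, xs ! (i + 1)} | i. i + 1 < length xs})"

definition is_cycle_on :: "'a set \<Rightarrow> 'a set set \<Rightarrow> bool" where
  "is_cycle_on C E \<longleftrightarrow> (\<exists>xs. distinct xs \<and> length xs \<ge> 3 \<and> set xs = C \<and>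
     {e \<in> E. e \<subseteq> C} = {{xs ! i, xs ! ((i + 1) mod length xs)} | i. i < length xs})"

definition TS :: "'a set set \<Rightarrow> 'a set \<Rightarrow> 'a set" where
  "TS E S = {v \<in> S. card {u \<in> S. adj E v u} \<ge> 2}"

end

theory Submission
  imports Defs
begin


lemma adj_sym: "adj E u w \<Longrightarrow> adj E w u"
  by (simp add: adj_def insert_commute)

lemma adj_rtr_sym: "(adj E)\<^sup>*\<^sup>* u w \<Longrightarrow> (adj E)\<^sup>*\<^sup>* w u"
proof -
  have "symp (adj E)" by (auto intro: sympI adj_sym)
  hence "symp (adj E)\<^sup>*\<^sup>*" by (rule symp_rtranclp)
  thus "(adj E)\<^sup>*\<^sup>* u w \<Longrightarrow> (adj E)\<^sup>*\<^sup>* w u" by (meson sympD)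
qed

lemma comp_sub: "component V E v \<subseteq> V" by (auto simp: component_def)

lemma comp_self: "v \<in> V \<Longrightarrow> v \<in> component V E v" by (auto simp: component_def)

lemma comp_eq:
  assumes "x \<in> component V E v" "x \<in> component V E w"
  shows "component V E v = component V E w"
proof -
  have vx: "(adj E)\<^sup>*\<^sup>* v x" and wx: "(adj E)\<^sup>*\<^sup>* w x" using assms by (simp_all add: component_def)
  have vw: "(adj E)\<^sup>*\<^sup>* v w" using rtranclp_trans[OF vx adj_rtr_sym[OF wx]] .
  have wv: "(adj E)\<^sup>*\<^sup>* w v" using adj_rtr_sym[OF vw] .
  show ?thesis unfolding component_def
    using rtranclp_trans[OF vw] rtranclp_trans[OF wv] by blast
qed

lemma comps_disj:
  assumes "C1 \<in> components V E" "C2 \<in> components V E" "x \<in> C1" "x \<in> C2"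
  shows "C1 = C2"
proof -
  obtain v1 where v1: "C1 = component V E v1" using assms(1) unfolding components_def by blast
  obtain v2 where v2: "C2 = component V E v2" using assms(2) unfolding components_def by blast
  show ?thesis using comp_eq[of x V E v1 v2] assms(3,4) v1 v2 by simp
qed

lemma comp_in_sub2: "C \<in> components V E \<Longrightarrow> C \<subseteq> V"
proof -
  assume "C \<in> components V E"
  then obtain v where "C = component V E v" unfolding components_def by blast
  thus ?thesis using comp_sub by simp
qed

lemmas comp_in_sub = comp_in_sub2

lemma comps_union: "\<Union> (components V E) = V"
proof
  show "\<Union> (components V E) \<subseteq> V" using comp_in_sub by blast
  show "V \<subseteq> \<Union> (components V E)"
  proof
    fix x assume "x \<in> V"
    hence "x \<in> component V E x" "component V E x \<in> components V E"
      by (simp_all add: comp_self components_def)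
    thus "x \<in> \<Union> (components V E)" by blast
  qed
qed

lemma card_V_comps:
  assumes "finite V"
  shows "card V = (\<Sum>C\<in>components V E. card C)"
proof -
  have "card (\<Union> (components V E)) = (\<Sum>C\<in>components V E. card C)"
  proof (rule card_Union_disjoint)
    show "pairwise disjnt (components V E)" unfolding pairwise_def disjnt_def
    proof (intro ballI impI)
      fix C1 C2 assume "C1 \<in> components V E" "C2 \<in> components V E" "C1 \<noteq> C2"
      thus "C1 \<inter> C2 = {}" using comps_disj[of C1 V E C2] by blast
    qed
    fix C assume "C \<in> components V E"
    show "finite C" using finite_subset[OF comp_in_sub[OF \<open>C \<in> components V E\<close>] assms] .
  qed
  thus ?thesis by (simp add: comps_union)
qed

lemma path_edges_inj:
  assumes "distinct xs"
  shows "inj_on (\<lambda>i. {xs ! i, xs ! (i + 1)}) {i. i + 1 < length xs}"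
proof (rule inj_onI)
  fix i j assume i: "i \<in> {i. i + 1 < length xs}" and j: "j \<in> {i. i + 1 < length xs}"
    and e: "{xs ! i, xs ! (i + 1)} = {xs ! j, xs ! (j + 1)}"
  from e have "xs ! i = xs ! j \<and> xs ! (i+1) = xs ! (j+1) \<or> xs ! i = xs ! (j+1) \<and> xs ! (i+1) = xs ! j"
    by (simp add: doubleton_eq_iff)
  thus "i = j" using i j assms by (auto simp: nth_eq_iff_index_eq)
qed

lemma comp_edges_ge:
  assumes "is_cycle_on C E \<or> is_path_on C E"
  shows "card C \<le> card {e\<in>E. e \<subseteq> C} + 1" and "finite C"
proof -
  obtain xs where d: "distinct xs" "set xs = C"
    and sub: "{{xs ! i, xs ! (i + 1)} | i. i + 1 < length xs} \<subseteq> {e\<in>E. e \<subseteq> C}"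
  proof (cases "is_path_on C E")
    case True
    then obtain xs where "distinct xs" "set xs = C"
      "{e \<in> E. e \<subseteq> C} = {{xs ! i, xs ! (i + 1)} | i. i + 1 < length xs}"
      unfolding is_path_on_def by blast
    thus ?thesis using that by auto
  next
    case False
    then obtain xs where "distinct xs" "set xs = C"
      "{e \<in> E. e \<subseteq> C} = {{xs ! i, xs ! ((i + 1) mod length xs)} | i. i < length xs}"
      using assms unfolding is_cycle_on_def by blast
    moreover have "{{xs ! i, xs ! (i + 1)} | i. i + 1 < length xs} \<subseteq> {{xs ! i, xs ! ((i + 1) mod length xs)} | i. i < length xs}"
    proof
      fix e assume "e \<in> {{xs ! i, xs ! (i + 1)} | i. i + 1 < length xs}"
      then obtain i where "i + 1 < length xs" "e = {xs ! i, xs ! (i + 1)}" by blast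
      thus "e \<in> {{xs ! i, xs ! ((i + 1) mod length xs)} | i. i < length xs}"
        by (intro CollectI exI[of _ i]) auto
    qed
    ultimately show ?thesis using that by auto
  qed
  show "finite C" using d by auto
  have fE: "finite {e\<in>E. e \<subseteq> C}"
  proof -
    have "{e\<in>E. e \<subseteq> C} \<subseteq> Pow C" by auto
    thus ?thesis using d by (metis finite_Pow_iff finite_set finite_subset)
  qed
  have "{{xs ! i, xs ! (i + 1)} | i. i + 1 < length xs} = (\<lambda>i. {xs ! i, xs ! (i + 1)}) ` {i. i + 1 < length xs}"
    by auto
  hence "card {{xs ! i, xs ! (i + 1)} | i. i + 1 < length xs} = card {i. i + 1 < length xs}"
    using path_edges_inj[OF d(1)] by (simp add: card_image)
  also have "{i. i + 1 < length xs} = {..<length xs - 1}" by auto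
  finally have "card {{xs ! i, xs ! (i + 1)} | i. i + 1 < length xs} = length xs - 1" by simp
  moreover have "card {{xs ! i, xs ! (i + 1)} | i. i + 1 < length xs} \<le> card {e\<in>E. e \<subseteq> C}"
    using card_mono[OF fE sub] .
  moreover have "card C = length xs" using d by (metis distinct_card)
  ultimately show "card C \<le> card {e\<in>E. e \<subseteq> C} + 1" by linarith
qed

lemma ar: fixes i j n :: nat assumes i: "i < n" and h: "(i + 1) mod n = j"
  shows "i = (j + n - 1) mod n"
proof (cases "i + 1 = n")
  case True
  have z: "(i+1) mod n = 0" by (simp only: True mod_self)
  have "j = 0" using h z by linarith
  hence q: "j + n - 1 = i" using True by linarith
  have r: "i mod n = i" by (rule mod_less[OF i])
  show ?thesis by (simp only: q r)
next
  case False
  hence l: "i + 1 < n" using i by linarith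
  have z: "(i + 1) mod n = i + 1" by (rule mod_less[OF l])
  hence "j = i + 1" using h by linarith
  hence q: "j + n - 1 = i + n" by linarith
  have r1: "(i + n) mod n = i mod n" by (rule mod_add_self2)
  have r: "i mod n = i" by (rule mod_less[OF i])
  show ?thesis by (simp only: q r1 r)
qed

lemma deg_le2:
  assumes sg: "simple_graph V E"
    and cc: "\<And>C. C \<in> components V E \<Longrightarrow> is_cycle_on C E \<or> is_path_on C E"
    and v: "v \<in> V"
  shows "card {u\<in>V. adj E v u} \<le> 2"
proof -
  let ?C = "component V E v"
  have Cin: "?C \<in> components V E" using v by (simp add: components_def)
  have vC: "v \<in> ?C" using v by (rule comp_self)
  have nb: "\<And>u. u \<in> V \<Longrightarrow> adj E v u \<Longrightarrow> {v, u} \<in> {e\<in>E. e \<subseteq> ?C}"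
  proof -
    fix u assume "u \<in> V" "adj E v u"
    hence "u \<in> ?C" unfolding component_def by auto
    thus "{v, u} \<in> {e\<in>E. e \<subseteq> ?C}" using vC \<open>adj E v u\<close> by (auto simp: adj_def)
  qed
  obtain a b where ab: "{u\<in>V. adj E v u} \<subseteq> {a, b}"
  proof (cases "is_path_on ?C E")
    case True
    then obtain xs where d: "distinct xs" "set xs = ?C"
      and eq: "{e \<in> E. e \<subseteq> ?C} = {{xs ! i, xs ! (i + 1)} | i. i + 1 < length xs}"
      unfolding is_path_on_def by blast
    obtain j where j: "j < length xs" "v = xs ! j" using vC d by (metis in_set_conv_nth)
    have "{u\<in>V. adj E v u} \<subseteq> {xs ! (j+1), xs ! (j - 1)}"
    proof
      fix u assume "u \<in> {u\<in>V. adj E v u}"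
      then have "{v, u} \<in> {e\<in>E. e \<subseteq> ?C}" using nb by blast
      then have "{v, u} \<in> {{xs ! i, xs ! (i + 1)} | i. i + 1 < length xs}" by (simp only: eq)
      then obtain i where i: "i + 1 < length xs" "{v, u} = {xs ! i, xs ! (i + 1)}"
        by blast
      hence "v = xs ! i \<and> u = xs ! (i+1) \<or> v = xs ! (i+1) \<and> u = xs ! i"
        by (simp add: doubleton_eq_iff)
      moreover have inj: "\<And>a b. a < length xs \<Longrightarrow> b < length xs \<Longrightarrow> xs!a = xs!b \<Longrightarrow> a = b"
        using d(1) nth_eq_iff_index_eq by blast
      ultimately show "u \<in> {xs ! (j+1), xs ! (j - 1)}"
      proof (elim disjE conjE)
        assume a1: "v = xs ! i" "u = xs ! (i+1)"
        have e1: "xs ! i = xs ! j" using a1(1) j(2) by (rule trans[OF sym])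
        have l1: "i < length xs" using i(1) by linarith
        have "i = j" using inj[OF l1 j(1) e1] .
        thus ?thesis using a1(2) by blast
      next
        assume a1: "v = xs ! (i+1)" "u = xs ! i"
        have e1: "xs ! (i+1) = xs ! j" using a1(1) j(2) by (rule trans[OF sym])
        have "i + 1 = j" using inj[OF i(1) j(1) e1] .
        hence "i = j - 1" by linarith
        thus ?thesis using a1(2) by blast
      qed
    qed
    thus ?thesis using that by blast
  next
    case False
    then obtain xs where d: "distinct xs" "set xs = ?C"
      and eq: "{e \<in> E. e \<subseteq> ?C} = {{xs ! i, xs ! ((i + 1) mod length xs)} | i. i < length xs}"
      using cc[OF Cin] unfolding is_cycle_on_def by blast
    obtain j where j: "j < length xs" "v = xs ! j" using vC d by (metis in_set_conv_nth)
    have "{u\<in>V. adj E v u} \<subseteq> {xs ! ((j+1) mod length xs), xs ! ((j + length xs - 1) mod length xs)}"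
    proof
      fix u assume "u \<in> {u\<in>V. adj E v u}"
      then have "{v, u} \<in> {e\<in>E. e \<subseteq> ?C}" using nb by blast
      then have "{v, u} \<in> {{xs ! i, xs ! ((i + 1) mod length xs)} | i. i < length xs}" by (simp only: eq)
      then obtain i where i: "i < length xs" "{v, u} = {xs ! i, xs ! ((i + 1) mod length xs)}"
        by blast
      hence "v = xs ! i \<and> u = xs ! ((i + 1) mod length xs) \<or> v = xs ! ((i + 1) mod length xs) \<and> u = xs ! i"
        by (simp add: doubleton_eq_iff)
      moreover have inj: "\<And>a b. a < length xs \<Longrightarrow> b < length xs \<Longrightarrow> xs!a = xs!b \<Longrightarrow> a = b"
        using d(1) nth_eq_iff_index_eq by blast
      moreover have m: "(i + 1) mod length xs < length xs" using i(1) by (intro mod_less_divisor) linarith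
      ultimately show "u \<in> {xs ! ((j+1) mod length xs), xs ! ((j + length xs - 1) mod length xs)}"
      proof (elim disjE conjE)
        assume a1: "v = xs ! i" "u = xs ! ((i + 1) mod length xs)"
        have e1: "xs ! i = xs ! j" using a1(1) j(2) by (rule trans[OF sym])
        have "i = j" using inj[OF i(1) j(1) e1] .
        thus ?thesis using a1(2) by blast
      next
        assume a1: "v = xs ! ((i + 1) mod length xs)" "u = xs ! i"
        have e1: "xs ! ((i + 1) mod length xs) = xs ! j" using a1(1) j(2) by (rule trans[OF sym])
        have h: "(i + 1) mod length xs = j" using inj[OF m j(1) e1] .
        have "i = (j + length xs - 1) mod length xs" by (rule ar[OF i(1) h])
        hence "u = xs ! ((j + length xs - 1) mod length xs)" by (simp only: a1(2))
        thus ?thesis by simp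
      qed
    qed
    thus ?thesis using that by blast
  qed
  have "card {u\<in>V. adj E v u} \<le> card {a, b}" by (rule card_mono[OF _ ab]) simp
  also have "\<dots> \<le> 2" by (simp add: card_insert_if)
  finally show ?thesis .
qed



lemma finite_E:
  assumes "finite V" "simple_graph V E"
  shows "finite E"
proof -
  have "E \<subseteq> Pow V" using assms(2) unfolding simple_graph_def by blast
  moreover have "finite (Pow V)" using assms(1) by simp
  ultimately show ?thesis by (rule finite_subset)
qed

lemma edge_deg:
  assumes sg: "simple_graph V E" and fA: "finite A"
  shows "card {e\<in>E. e \<subseteq> A \<and> v \<in> e} \<le> card {u\<in>A. adj E v u}"
proof -
  have sub: "{e\<in>E. e \<subseteq> A \<and> v \<in> e} \<subseteq> (\<lambda>u. {v, u}) ` {u\<in>A. adj E v u}"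
  proof
    fix e assume e: "e \<in> {e\<in>E. e \<subseteq> A \<and> v \<in> e}"
    hence "card e = 2" using sg unfolding simple_graph_def by blast
    then obtain x y where xy: "e = {x, y}" "x \<noteq> y" by (auto simp: card_2_iff)
    have vin: "v \<in> e" and eA: "e \<subseteq> A" and eE: "e \<in> E" using e by auto
    show "e \<in> (\<lambda>u. {v, u}) ` {u\<in>A. adj E v u}"
    proof (cases "v = x")
      case True
      hence "e = {v, y}" using xy by simp
      moreover have "y \<in> A" using eA xy by blast
      moreover have "adj E v y" using eE \<open>e = {v, y}\<close> by (simp add: adj_def)
      ultimately show ?thesis by blast
    next
      case False
      hence "v = y" using vin xy by blast
      hence "e = {v, x}" using xy by blast
      moreover have "x \<in> A" using eA xy by blast
      moreover have "adj E v x" using eE \<open>e = {v, x}\<close> by (simp add: adj_def)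
      ultimately show ?thesis by blast
    qed
  qed
  have f: "finite {u\<in>A. adj E v u}" using fA by simp
  have "card {e\<in>E. e \<subseteq> A \<and> v \<in> e} \<le> card ((\<lambda>u. {v, u}) ` {u\<in>A. adj E v u})"
    by (rule card_mono[OF finite_imageI[OF f] sub])
  also have "\<dots> \<le> card {u\<in>A. adj E v u}" by (rule card_image_le[OF f])
  finally show ?thesis .
qed

lemma card_as_sum:
  assumes "finite A" 
  shows "card {x\<in>A. P x} = (\<Sum>x\<in>A. if P x then 1 else 0)"
proof -
  have "card {x\<in>A. P x} = (\<Sum>x\<in>{x\<in>A. P x}. 1)" by simp
  also have "\<dots> = (\<Sum>x\<in>A. if P x then 1 else 0)" by (rule sum.inter_filter[OF assms])
  finally show ?thesis .
qed

lemma det: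
  assumes fin: "finite V" and SV: "S \<subseteq> V" and sg: "simple_graph V E"
    and cc: "\<And>C. C \<in> components V E \<Longrightarrow> is_cycle_on C E \<or> is_path_on C E"
  shows "3 * card S \<le> 2 * card V + 2 * card (components V E) + card (TS E S)"
proof -
  define ES where "ES = {e\<in>E. e \<subseteq> S}"
  define T where "T = TS E S"
  have fE: "finite E" using finite_E[OF fin sg] .
  have fS: "finite S" using finite_subset[OF SV fin] .
  have fES: "finite ES" unfolding ES_def using fE by simp
  have TS: "T \<subseteq> S" unfolding T_def TS_def by blast
  have "(\<Sum>v\<in>S. card {e\<in>ES. v \<in> e}) = (\<Sum>v\<in>S. \<Sum>e\<in>ES. (if v \<in> e then 1 else 0::nat))"
    using card_as_sum[OF fES] by simp
  also have "\<dots> = (\<Sum>e\<in>ES. \<Sum>v\<in>S. (if v \<in> e then 1 else 0::nat))" by (rule sum.swap)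
  also have "\<dots> = (\<Sum>e\<in>ES. card {v\<in>S. v \<in> e})"
    using card_as_sum[OF fS] by simp
  also have "\<dots> = (\<Sum>e\<in>ES. 2)"
  proof (rule sum.cong)
    fix e assume "e \<in> ES"
    hence "e \<subseteq> S" "e \<in> E" unfolding ES_def by auto
    hence "{v\<in>S. v \<in> e} = e" by blast
    moreover have "card e = 2" using \<open>e \<in> E\<close> sg unfolding simple_graph_def by blast
    ultimately show "card {v\<in>S. v \<in> e} = 2" by simp
  qed simp
  finally have hs: "(\<Sum>v\<in>S. card {e\<in>ES. v \<in> e}) = 2 * card ES" by simp
  have "(\<Sum>v\<in>S. card {e\<in>ES. v \<in> e}) \<le> (\<Sum>v\<in>S. (1 + (if v \<in> T then 1 else 0::nat)))"
  proof (rule sum_mono)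
    fix v assume vS: "v \<in> S"
    have "{e\<in>ES. v \<in> e} = {e\<in>E. e \<subseteq> S \<and> v \<in> e}" unfolding ES_def by blast
    hence "card {e\<in>ES. v \<in> e} \<le> card {u\<in>S. adj E v u}" using edge_deg[OF sg fS, of v] by simp
    also have "\<dots> \<le> 1 + (if v \<in> T then 1 else 0)"
    proof (cases "v \<in> T")
      case True
      have "card {u\<in>S. adj E v u} \<le> card {u\<in>V. adj E v u}"
        by (rule card_mono) (use fin SV in auto)
      also have "\<dots> \<le> 2" by (rule deg_le2[OF sg cc subsetD[OF SV vS]])
      finally show ?thesis using True by simp
    next
      case False
      hence "\<not> 2 \<le> card {u\<in>S. adj E v u}" using vS unfolding T_def TS_def by blast
      thus ?thesis by simp
    qed
    finally show "card {e\<in>ES. v \<in> e} \<le> 1 + (if v \<in> T then 1 else 0)" .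
  qed
  also have "\<dots> = card S + (\<Sum>v\<in>S. (if v \<in> T then 1 else 0::nat))"
    by (subst sum.distrib) simp
  also have "(\<Sum>v\<in>S. (if v \<in> T then 1 else 0::nat)) = card {v\<in>S. v \<in> T}"
    using card_as_sum[OF fS] by simp
  also have "{v\<in>S. v \<in> T} = T" using TS by blast
  finally have a: "2 * card ES \<le> card S + card T" using hs by simp
  have Esub: "E \<subseteq> ES \<union> (\<Union>w\<in>V - S. {e\<in>E. e \<subseteq> V \<and> w \<in> e})"
  proof
    fix e assume eE: "e \<in> E"
    hence eV: "e \<subseteq> V" using sg unfolding simple_graph_def by blast
    show "e \<in> ES \<union> (\<Union>w\<in>V - S. {e\<in>E. e \<subseteq> V \<and> w \<in> e})"
    proof (cases "e \<subseteq> S")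
      case True thus ?thesis using eE unfolding ES_def by blast
    next
      case False
      then obtain w where "w \<in> e" "w \<notin> S" by blast
      thus ?thesis using eE eV by blast
    qed
  qed
  have fD: "finite (V - S)" using fin by simp
  have "card E \<le> card (ES \<union> (\<Union>w\<in>V - S. {e\<in>E. e \<subseteq> V \<and> w \<in> e}))"
  proof (rule card_mono[OF _ Esub])
    have "ES \<union> (\<Union>w\<in>V - S. {e\<in>E. e \<subseteq> V \<and> w \<in> e}) \<subseteq> E" unfolding ES_def by blast
    thus "finite (ES \<union> (\<Union>w\<in>V - S. {e\<in>E. e \<subseteq> V \<and> w \<in> e}))" using fE by (rule finite_subset)
  qed
  also have "\<dots> \<le> card ES + card (\<Union>w\<in>V - S. {e\<in>E. e \<subseteq> V \<and> w \<in> e})"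
    by (rule card_Un_le)
  also have "card (\<Union>w\<in>V - S. {e\<in>E. e \<subseteq> V \<and> w \<in> e}) \<le> (\<Sum>w\<in>V - S. card {e\<in>E. e \<subseteq> V \<and> w \<in> e})"
    by (rule card_UN_le[OF fD])
  also have "\<dots> \<le> (\<Sum>w\<in>V - S. 2)"
  proof (rule sum_mono)
    fix w assume "w \<in> V - S"
    have "card {e\<in>E. e \<subseteq> V \<and> w \<in> e} \<le> card {u\<in>V. adj E w u}" by (rule edge_deg[OF sg fin])
    also have "\<dots> \<le> 2" by (rule deg_le2[OF sg cc DiffD1[OF \<open>w \<in> V - S\<close>]])
    finally show "card {e\<in>E. e \<subseteq> V \<and> w \<in> e} \<le> 2" .
  qed
  finally have c: "card E \<le> card ES + 2 * card (V - S)" by simp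
  have fC: "finite (components V E)" using fin unfolding components_def by simp
  have "card V = (\<Sum>C\<in>components V E. card C)" by (rule card_V_comps[OF fin])
  also have "\<dots> \<le> (\<Sum>C\<in>components V E. card {e\<in>E. e \<subseteq> C} + 1)"
    by (rule sum_mono) (rule comp_edges_ge(1)[OF cc])
  also have "\<dots> = (\<Sum>C\<in>components V E. card {e\<in>E. e \<subseteq> C}) + card (components V E)"
    by (subst sum.distrib) simp
  also have "(\<Sum>C\<in>components V E. card {e\<in>E. e \<subseteq> C}) = card (\<Union>C\<in>components V E. {e\<in>E. e \<subseteq> C})"
  proof (rule card_UN_disjoint[symmetric, OF fC])
    show "\<forall>C\<in>components V E. finite {e\<in>E. e \<subseteq> C}" using fE by simp
    show "\<forall>C1\<in>components V E. \<forall>C2\<in>components V E. C1 \<noteq> C2 \<longrightarrow> {e\<in>E. e \<subseteq> C1} \<inter> {e\<in>E. e \<subseteq> C2} = {}"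
    proof (intro ballI impI)
      fix C1 C2 assume c1: "C1 \<in> components V E" and c2: "C2 \<in> components V E" and ne: "C1 \<noteq> C2"
      show "{e\<in>E. e \<subseteq> C1} \<inter> {e\<in>E. e \<subseteq> C2} = {}"
      proof (rule ccontr)
        assume "{e\<in>E. e \<subseteq> C1} \<inter> {e\<in>E. e \<subseteq> C2} \<noteq> {}"
        then obtain e where e: "e \<in> E" "e \<subseteq> C1" "e \<subseteq> C2" by blast
        have "card e = 2" using e(1) sg unfolding simple_graph_def by blast
        hence "e \<noteq> {}" by auto
        then obtain x where "x \<in> e" by blast
        hence "x \<in> C1" "x \<in> C2" using e by auto
        hence "C1 = C2" by (rule comps_disj[OF c1 c2])
        thus False using ne by contradiction
      qed
    qed
  qed
  also have "card (\<Union>C\<in>components V E. {e\<in>E. e \<subseteq> C}) \<le> card E"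
    by (rule card_mono[OF fE]) blast
  finally have d: "card V \<le> card E + card (components V E)" by simp
  have dS: "card (V - S) + card S = card V"
    using card_Diff_subset[OF fS SV] card_mono[OF fin SV] by simp
  show ?thesis using a c d dS unfolding T_def by linarith
qed



lemma int_pmf:
  fixes f :: "'w \<Rightarrow> real"
  assumes "\<And>\<omega>. \<omega> \<in> set_pmf \<Omega> \<Longrightarrow> \<bar>f \<omega>\<bar> \<le> B"
  shows "integrable (measure_pmf \<Omega>) f"
  by (rule measure_pmf.integrable_const_bound[where B=B]) (simp_all add: AE_measure_pmf_iff assms)

lemma exp_card:
  fixes X :: "'w \<Rightarrow> 'a set"
  assumes fU: "finite U" and XU: "\<And>\<omega>. \<omega> \<in> set_pmf \<Omega> \<Longrightarrow> X \<omega> \<subseteq> U"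
  shows "measure_pmf.expectation \<Omega> (\<lambda>\<omega>. real (card (X \<omega>)))
         = (\<Sum>I\<in>U. measure_pmf.prob \<Omega> {\<omega>. I \<in> X \<omega>})"
proof -
  have "measure_pmf.expectation \<Omega> (\<lambda>\<omega>. real (card (X \<omega>)))
      = measure_pmf.expectation \<Omega> (\<lambda>\<omega>. \<Sum>I\<in>U. indicator {\<omega>. I \<in> X \<omega>} \<omega>)"
  proof (rule integral_cong_AE)
    show "AE \<omega> in measure_pmf \<Omega>. real (card (X \<omega>)) = (\<Sum>I\<in>U. indicator {\<omega>. I \<in> X \<omega>} \<omega>)"
      unfolding AE_measure_pmf_iff
    proof
      fix \<omega> assume w: "\<omega> \<in> set_pmf \<Omega>"
      have "X \<omega> = {I\<in>U. I \<in> X \<omega>}" using XU[OF w] by blast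
      hence "card (X \<omega>) = (\<Sum>I\<in>U. if I \<in> X \<omega> then 1 else 0)"
        using card_as_sum[OF fU, of "\<lambda>I. I \<in> X \<omega>"] by simp
      hence "real (card (X \<omega>)) = real (\<Sum>I\<in>U. if I \<in> X \<omega> then 1 else 0)" by simp
      also have "\<dots> = (\<Sum>I\<in>U. real (if I \<in> X \<omega> then 1 else 0))" by (rule of_nat_sum)
      also have "\<dots> = (\<Sum>I\<in>U. indicator {\<omega>. I \<in> X \<omega>} \<omega>)"
        by (rule sum.cong) (simp_all add: indicator_def)
      finally show "real (card (X \<omega>)) = (\<Sum>I\<in>U. indicator {\<omega>. I \<in> X \<omega>} \<omega>)" .
    qed
  qed simp_all
  also have "\<dots> = (\<Sum>I\<in>U. measure_pmf.expectation \<Omega> (indicator {\<omega>. I \<in> X \<omega>}))"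
    by (rule Bochner_Integration.integral_sum[where f="\<lambda>I. (indicator {\<omega>. I \<in> X \<omega>} :: 'w \<Rightarrow> real)"]) (rule int_pmf[where B=1], simp add: indicator_def)
  also have "\<dots> = (\<Sum>I\<in>U. measure_pmf.prob \<Omega> {\<omega>. I \<in> X \<omega>})" by simp
  finally show ?thesis .
qed

theorem lemma4p13:
  fixes U :: "'a set" and \<Omega> :: "'w pmf"
    and Vr Sr :: "'w \<Rightarrow> 'a set" and Er :: "'w \<Rightarrow> 'a set set"
    and k :: "'w \<Rightarrow> nat" and p :: real
  assumes "finite U"
    and "\<And>\<omega>. \<omega> \<in> set_pmf \<Omega> \<Longrightarrow> Sr \<omega> \<subseteq> Vr \<omega> \<and> Vr \<omega> \<subseteq> U"
    and "\<And>\<omega>. \<omega> \<in> set_pmf \<Omega> \<Longrightarrow> simple_graph (Vr \<omega>) (Er \<omega>)"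
    and "\<And>\<omega>. \<omega> \<in> set_pmf \<Omega> \<Longrightarrow> k \<omega> = card (components (Vr \<omega>) (Er \<omega>))"
    and "\<And>\<omega> C. \<omega> \<in> set_pmf \<Omega> \<Longrightarrow> C \<in> components (Vr \<omega>) (Er \<omega>) \<Longrightarrow>
           is_cycle_on C (Er \<omega>) \<or> is_path_on C (Er \<omega>)"
    and "p > 2 / 3"
    and "\<And>I. I \<in> U \<Longrightarrow>
           measure_pmf.prob \<Omega> {\<omega>. I \<in> Sr \<omega> \<and> I \<in> Vr \<omega>}
             \<ge> p * measure_pmf.prob \<Omega> {\<omega>. I \<in> Vr \<omega>}"
  shows "measure_pmf.expectation \<Omega> (\<lambda>\<omega>. real (card (Vr \<omega>)))
           \<le> (2 * measure_pmf.expectation \<Omega> (\<lambda>\<omega>. real (k \<omega>))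
              + measure_pmf.expectation \<Omega> (\<lambda>\<omega>. real (card (TS (Er \<omega>) (Sr \<omega>)))))
             / (3 * p - 2)"
proof -
  note fU = assms(1)
  let ?M = "measure_pmf \<Omega>"
  define EV where "EV = measure_pmf.expectation \<Omega> (\<lambda>\<omega>. real (card (Vr \<omega>)))"
  define ES where "ES = measure_pmf.expectation \<Omega> (\<lambda>\<omega>. real (card (Sr \<omega>)))"
  define EK where "EK = measure_pmf.expectation \<Omega> (\<lambda>\<omega>. real (k \<omega>))"
  define ET where "ET = measure_pmf.expectation \<Omega> (\<lambda>\<omega>. real (card (TS (Er \<omega>) (Sr \<omega>))))"
  have VU: "\<And>\<omega>. \<omega> \<in> set_pmf \<Omega> \<Longrightarrow> Vr \<omega> \<subseteq> U" using assms(2) by blast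
  have SV: "\<And>\<omega>. \<omega> \<in> set_pmf \<Omega> \<Longrightarrow> Sr \<omega> \<subseteq> Vr \<omega>" using assms(2) by blast
  have finV: "\<And>\<omega>. \<omega> \<in> set_pmf \<Omega> \<Longrightarrow> finite (Vr \<omega>)" by (rule finite_subset[OF VU fU])
  have cV: "\<And>\<omega>. \<omega> \<in> set_pmf \<Omega> \<Longrightarrow> card (Vr \<omega>) \<le> card U" by (rule card_mono[OF fU VU])
  have cS: "\<And>\<omega>. \<omega> \<in> set_pmf \<Omega> \<Longrightarrow> card (Sr \<omega>) \<le> card U"
    by (rule card_mono[OF fU subset_trans[OF SV VU]])
  have cT: "\<And>\<omega>. \<omega> \<in> set_pmf \<Omega> \<Longrightarrow> card (TS (Er \<omega>) (Sr \<omega>)) \<le> card U"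
  proof -
    fix \<omega> assume w: "\<omega> \<in> set_pmf \<Omega>"
    have "TS (Er \<omega>) (Sr \<omega>) \<subseteq> U" using SV[OF w] VU[OF w] unfolding TS_def by blast
    thus "card (TS (Er \<omega>) (Sr \<omega>)) \<le> card U" by (rule card_mono[OF fU])
  qed
  have cK: "\<And>\<omega>. \<omega> \<in> set_pmf \<Omega> \<Longrightarrow> k \<omega> \<le> card U"
  proof -
    fix \<omega> assume w: "\<omega> \<in> set_pmf \<Omega>"
    have "k \<omega> = card (component (Vr \<omega>) (Er \<omega>) ` Vr \<omega>)" using assms(4)[OF w] by (simp add: components_def)
    also have "\<dots> \<le> card (Vr \<omega>)" by (rule card_image_le[OF finV[OF w]])
    finally show "k \<omega> \<le> card U" using cV[OF w] by linarith
  qed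
  have iV: "integrable ?M (\<lambda>\<omega>. real (card (Vr \<omega>)))" by (rule int_pmf[where B="card U"]) (simp add: cV)
  have iS: "integrable ?M (\<lambda>\<omega>. real (card (Sr \<omega>)))" by (rule int_pmf[where B="card U"]) (simp add: cS)
  have iT: "integrable ?M (\<lambda>\<omega>. real (card (TS (Er \<omega>) (Sr \<omega>))))" by (rule int_pmf[where B="card U"]) (simp add: cT)
  have iK: "integrable ?M (\<lambda>\<omega>. real (k \<omega>))" by (rule int_pmf[where B="card U"]) (simp add: cK)
  have EVs: "EV = (\<Sum>I\<in>U. measure_pmf.prob \<Omega> {\<omega>. I \<in> Vr \<omega>})"
    unfolding EV_def by (rule exp_card[OF fU VU])
  have "ES = measure_pmf.expectation \<Omega> (\<lambda>\<omega>. real (card (Sr \<omega> \<inter> Vr \<omega>)))"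
    unfolding ES_def
  proof (rule integral_cong_AE)
    show "AE \<omega> in ?M. real (card (Sr \<omega>)) = real (card (Sr \<omega> \<inter> Vr \<omega>))"
      unfolding AE_measure_pmf_iff
    proof
      fix \<omega> assume w: "\<omega> \<in> set_pmf \<Omega>"
      have "Sr \<omega> \<inter> Vr \<omega> = Sr \<omega>" using SV[OF w] by blast
      thus "real (card (Sr \<omega>)) = real (card (Sr \<omega> \<inter> Vr \<omega>))" by simp
    qed
  qed simp_all
  also have "\<dots> = (\<Sum>I\<in>U. measure_pmf.prob \<Omega> {\<omega>. I \<in> Sr \<omega> \<inter> Vr \<omega>})"
  proof (rule exp_card[OF fU])
    fix \<omega> assume "\<omega> \<in> set_pmf \<Omega>"
    thus "Sr \<omega> \<inter> Vr \<omega> \<subseteq> U" using VU by blast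
  qed
  finally have ESs: "ES = (\<Sum>I\<in>U. measure_pmf.prob \<Omega> {\<omega>. I \<in> Sr \<omega> \<and> I \<in> Vr \<omega>})" by simp
  have "p * EV = (\<Sum>I\<in>U. p * measure_pmf.prob \<Omega> {\<omega>. I \<in> Vr \<omega>})"
    unfolding EVs by (rule sum_distrib_left)
  also have "\<dots> \<le> ES" unfolding ESs by (rule sum_mono) (rule assms(7))
  finally have pE: "p * EV \<le> ES" .
  have "measure_pmf.expectation \<Omega> (\<lambda>\<omega>. 3 * real (card (Sr \<omega>)))
      \<le> measure_pmf.expectation \<Omega> (\<lambda>\<omega>. 2 * real (card (Vr \<omega>)) + 2 * real (k \<omega>) + real (card (TS (Er \<omega>) (Sr \<omega>))))"
  proof (rule integral_mono_AE)
    show "integrable ?M (\<lambda>\<omega>. 3 * real (card (Sr \<omega>)))" using iS by simp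
    show "integrable ?M (\<lambda>\<omega>. 2 * real (card (Vr \<omega>)) + 2 * real (k \<omega>) + real (card (TS (Er \<omega>) (Sr \<omega>))))"
      using iV iK iT by simp
    show "AE \<omega> in ?M. 3 * real (card (Sr \<omega>)) \<le> 2 * real (card (Vr \<omega>)) + 2 * real (k \<omega>) + real (card (TS (Er \<omega>) (Sr \<omega>)))"
      unfolding AE_measure_pmf_iff
    proof
      fix \<omega> assume w: "\<omega> \<in> set_pmf \<Omega>"
      have "3 * card (Sr \<omega>) \<le> 2 * card (Vr \<omega>) + 2 * card (components (Vr \<omega>) (Er \<omega>)) + card (TS (Er \<omega>) (Sr \<omega>))"
        by (rule det[OF finV[OF w] SV[OF w] assms(3)[OF w] assms(5)[OF w]])
      hence "3 * card (Sr \<omega>) \<le> 2 * card (Vr \<omega>) + 2 * k \<omega> + card (TS (Er \<omega>) (Sr \<omega>))"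
        using assms(4)[OF w] by simp
      hence "real (3 * card (Sr \<omega>)) \<le> real (2 * card (Vr \<omega>) + 2 * k \<omega> + card (TS (Er \<omega>) (Sr \<omega>)))"
        by (rule of_nat_mono)
      thus "3 * real (card (Sr \<omega>)) \<le> 2 * real (card (Vr \<omega>)) + 2 * real (k \<omega>) + real (card (TS (Er \<omega>) (Sr \<omega>)))"
        by simp
    qed
  qed
  also have "measure_pmf.expectation \<Omega> (\<lambda>\<omega>. 2 * real (card (Vr \<omega>)) + 2 * real (k \<omega>) + real (card (TS (Er \<omega>) (Sr \<omega>))))
      = 2 * EV + 2 * EK + ET"
    unfolding EV_def EK_def ET_def using iV iK iT by simp
  finally have main: "3 * ES \<le> 2 * EV + 2 * EK + ET" unfolding ES_def by simp
  have pos: "3 * p - 2 > 0" using assms(6) by simp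
  have eq: "(3 * p - 2) * EV = 3 * (p * EV) - 2 * EV" by (simp add: algebra_simps)
  have "(3 * p - 2) * EV \<le> 2 * EK + ET" unfolding eq using main pE by linarith
  hence "EV \<le> (2 * EK + ET) / (3 * p - 2)" using pos by (simp add: pos_le_divide_eq mult.commute)
  thus ?thesis unfolding EV_def EK_def ET_def .
qed

end
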